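(* For every integer $k\ge 1$, every vertex of every graph $G$ with $\mathrm{adim}(G)=k$ has degree at most $k+2^k-1$. Moreover, there exists a graph $G$ with $\mathrm{adim}(G)=k$ having a vertex of degree exactly $k+2^k-1$.
   Context: $d(x,y)$ is the length of a shortest $x$–$y$ path, with $d(x,y)=\infty$ if $x,y$ lie in different components. Let $d_1(x,y)=\min\{d(x,y),2\}$. A set $A\subseteq V(G)$ is an adjacency resolving set if for all distinct $x,y\in V(G)$ there is $z\in A$ with $d_1(x,z)\ne d_1(y,z)$. The adjacency dimension $\mathrm{adim}(G)$ is the minimum size of an adjacency resolving set. *)

theory Defs
  imports Main "HOL-Library.Extended_Nat"
begin

definition simple_graph :: "'a set \<Rightarrow> ('a \<Rightarrow> 'a \<Rightarrow> bool) \<Rightarrow> bool" where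
  "simple_graph V E \<longleftrightarrow> finite V \<and>
     (\<forall>x y. E x y \<longrightarrow> x \<in> V \<and> y \<in> V) \<and>
     (\<forall>x y. E x y \<longrightarrow> E y x) \<and> (\<forall>x. \<not> E x x)"

definition degree :: "'a set \<Rightarrow> ('a \<Rightarrow> 'a \<Rightarrow> bool) \<Rightarrow> 'a \<Rightarrow> nat" where
  "degree V E v = card {u \<in> V. E v u}"

definition is_walk :: "'a set \<Rightarrow> ('a \<Rightarrow> 'a \<Rightarrow> bool) \<Rightarrow> 'a list \<Rightarrow> bool" where
  "is_walk V E p \<longleftrightarrow> p \<noteq> [] \<and> set p \<subseteq> V \<and>
     (\<forall>i. Suc i < length p \<longrightarrow> E (p ! i) (p ! Suc i))"

text \<open>Shortest-path distance, \<infinity> if no walk exists.\<close>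
definition dist :: "'a set \<Rightarrow> ('a \<Rightarrow> 'a \<Rightarrow> bool) \<Rightarrow> 'a \<Rightarrow> 'a \<Rightarrow> enat" where
  "dist V E x y = Inf {enat (length p - 1) | p. is_walk V E p \<and> hd p = x \<and> last p = y}"

definition dist1 :: "'a set \<Rightarrow> ('a \<Rightarrow> 'a \<Rightarrow> bool) \<Rightarrow> 'a \<Rightarrow> 'a \<Rightarrow> enat" where
  "dist1 V E x y = min (dist V E x y) 2"

definition adj_resolving :: "'a set \<Rightarrow> ('a \<Rightarrow> 'a \<Rightarrow> bool) \<Rightarrow> 'a set \<Rightarrow> bool" where
  "adj_resolving V E A \<longleftrightarrow> A \<subseteq> V \<and>
     (\<forall>x\<in>V. \<forall>y\<in>V. x \<noteq> y \<longrightarrow> (\<exists>z\<in>A. dist1 V E x z \<noteq> dist1 V E y z))"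

definition adim :: "'a set \<Rightarrow> ('a \<Rightarrow> 'a \<Rightarrow> bool) \<Rightarrow> nat" where
  "adim V E = Min {card A | A. adj_resolving V E A}"

end

theory Submission
  imports Defs
begin

lemma dist_le:
  assumes "is_walk V E p" "hd p = x" "last p = y"
  shows "dist V E x y \<le> enat (length p - 1)"
  unfolding dist_def using assms by (intro Inf_lower) blast

lemma dist_fin:
  assumes "dist V E x y = enat n"
  shows "\<exists>p. is_walk V E p \<and> hd p = x \<and> last p = y \<and> length p - 1 = n"
proof -
  let ?S = "{enat (length p - 1) | p. is_walk V E p \<and> hd p = x \<and> last p = y}"
  have ne: "?S \<noteq> {}"
  proof
    assume "?S = {}" then have "dist V E x y = \<infinity>" unfolding dist_def by (simp add: Inf_enat_def)
    with assms show False by simp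
  qed
  have "Inf ?S \<in> ?S" using ne unfolding Inf_enat_def by (auto intro: LeastI)
  then show ?thesis using assms unfolding dist_def by auto
qed

lemma dist_self: "x \<in> V \<Longrightarrow> dist V E x x = 0"
proof -
  assume "x \<in> V"
  then have "is_walk V E [x]" by (simp add: is_walk_def)
  from dist_le[OF this] show ?thesis by (simp add: zero_enat_def[symmetric])
qed

lemma dist_zero: "dist V E x y = 0 \<Longrightarrow> x = y"
proof -
  assume "dist V E x y = 0"
  then have "dist V E x y = enat 0" by (simp add: zero_enat_def)
  from dist_fin[OF this] obtain p where p: "is_walk V E p" "hd p = x" "last p = y" "length p - 1 = 0"
    by blast
  then have "p \<noteq> []" by (simp add: is_walk_def)
  with p have "length p = 1" by (cases p) auto
  then obtain a where "p = [a]" by (cases p) auto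
  with p show ?thesis by simp
qed

lemma dist_one: "dist V E x y = 1 \<Longrightarrow> E x y"
proof -
  assume "dist V E x y = 1"
  then have "dist V E x y = enat 1" by (simp add: one_enat_def)
  from dist_fin[OF this] obtain p where p: "is_walk V E p" "hd p = x" "last p = y" "length p - 1 = 1"
    by blast
  then have "p \<noteq> []" by (simp add: is_walk_def)
  with p have "length p = 2" by (cases p) auto
  then obtain a b where ab: "p = [a,b]"
    by (cases p; cases "tl p") auto
  from p(1) have "E (p!0) (p!Suc 0)" unfolding is_walk_def using ab by auto
  with ab p show ?thesis by simp
qed

lemma dist1_self: "x \<in> V \<Longrightarrow> dist1 V E x x = 0"
  by (simp add: dist1_def dist_self)

lemma dist1_nz: "x \<noteq> y \<Longrightarrow> dist1 V E x y \<noteq> 0"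
  unfolding dist1_def using dist_zero[of V E x y]
  by (metis min_def zero_neq_numeral)

lemma dist1_one:
  assumes "simple_graph V E"
  shows "dist1 V E x y = 1 \<longleftrightarrow> E x y"
proof
  assume "dist1 V E x y = 1"
  then have "dist V E x y = 1" unfolding dist1_def
    by (cases "dist V E x y") (auto simp: min_def one_enat_def numeral_eq_enat split: if_splits)
  then show "E x y" by (rule dist_one)
next
  assume e: "E x y"
  with assms have "x \<in> V" "y \<in> V" "x \<noteq> y" unfolding simple_graph_def by metis+
  then have "is_walk V E [x,y]" using e by (auto simp: is_walk_def nth_Cons split: nat.splits)
  from dist_le[OF this] have le: "dist V E x y \<le> 1" by (simp add: one_enat_def)
  have "dist V E x y \<noteq> 0" using \<open>x \<noteq> y\<close> dist_zero by metis
  with le have "dist V E x y = 1"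
    by (cases "dist V E x y") (auto simp: one_enat_def zero_enat_def)
  then show "dist1 V E x y = 1" by (simp add: dist1_def)
qed

lemma dist1_two:
  assumes "dist1 V E x y \<noteq> 0" "dist1 V E x y \<noteq> 1"
  shows "dist1 V E x y = 2"
  using assms unfolding dist1_def
  by (cases "dist V E x y") (auto simp: min_def zero_enat_def one_enat_def numeral_eq_enat)

lemma card_bound:
  assumes g: "simple_graph V E" and r: "adj_resolving V E R"
  shows "card V \<le> card R + 2 ^ card R"
proof -
  have fin: "finite V" using g by (simp add: simple_graph_def)
  have RV: "R \<subseteq> V" using r by (simp add: adj_resolving_def)
  have finR: "finite R" using fin RV finite_subset by blast
  let ?f = "\<lambda>u. {z \<in> R. dist1 V E u z = 1}"
  have inj: "inj_on ?f (V - R)"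
  proof (rule inj_onI, rule ccontr)
    fix u w assume u: "u \<in> V - R" and w: "w \<in> V - R" and eq: "?f u = ?f w" and ne: "u \<noteq> w"
    from r u w ne obtain z where z: "z \<in> R" "dist1 V E u z \<noteq> dist1 V E w z"
      unfolding adj_resolving_def by blast
    have uz: "u \<noteq> z" "w \<noteq> z" using u w z by auto
    have iff: "dist1 V E u z = 1 \<longleftrightarrow> dist1 V E w z = 1" using eq z(1) by blast
    show False
    proof (cases "dist1 V E u z = 1")
      case True then show ?thesis using iff z by simp
    next
      case False
      then have "dist1 V E u z = 2" "dist1 V E w z = 2"
        using iff dist1_two dist1_nz uz by metis+
      then show ?thesis using z by simp
    qed
  qed
  have "?f ` (V - R) \<subseteq> Pow R" by auto
  then have "card (V - R) \<le> card (Pow R)"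
    using card_inj_on_le[OF inj] finR by auto
  also have "\<dots> = 2 ^ card R" using finR by (simp add: card_Pow)
  finally have "card (V - R) \<le> 2 ^ card R" .
  moreover have "card V = card R + card (V - R)"
    using fin RV by (metis card_Diff_subset card_mono le_add_diff_inverse finite_subset)
  ultimately show ?thesis by simp
qed

lemma V_resolving:
  assumes g: "simple_graph V E" shows "adj_resolving V E V"
  unfolding adj_resolving_def
proof (intro conjI ballI impI subset_refl)
  fix x y assume "x \<in> V" "y \<in> V" "x \<noteq> y"
  then have "dist1 V E x x \<noteq> dist1 V E y x" using dist1_self dist1_nz by metis
  then show "\<exists>z\<in>V. dist1 V E x z \<noteq> dist1 V E y z" using \<open>x \<in> V\<close> by blast
qed

lemma fin_cards:
  assumes "finite V"
  shows "finite {card A | A. adj_resolving V E A}"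
proof -
  have "{card A | A. adj_resolving V E A} \<subseteq> {..card V}"
    using assms by (auto simp: adj_resolving_def intro: card_mono)
  then show ?thesis using finite_subset by blast
qed

lemma part1:
  assumes g: "simple_graph V E" and a: "adim V E = k" and v: "v \<in> V"
  shows "degree V E v \<le> k + 2 ^ k - 1"
proof -
  have fin: "finite V" using g by (simp add: simple_graph_def)
  have "adim V E \<in> {card A | A. adj_resolving V E A}"
    unfolding adim_def using fin_cards[OF fin] V_resolving[OF g] by (intro Min_in) auto
  then obtain R where R: "adj_resolving V E R" "card R = k" using a by auto
  have cv: "card V \<le> k + 2 ^ k" using card_bound[OF g R(1)] R(2) by simp
  have "{u \<in> V. E v u} \<subseteq> V - {v}" using g by (auto simp: simple_graph_def)
  then have "degree V E v \<le> card (V - {v})" unfolding degree_def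
    using fin by (intro card_mono) auto
  also have "\<dots> = card V - 1" using v fin by simp
  finally show ?thesis using cv by simp
qed


definition GV :: "nat \<Rightarrow> nat set" where "GV k = {..<k + 2^k}"
definition GP :: "nat \<Rightarrow> nat \<Rightarrow> nat \<Rightarrow> bool" where
  "GP k x y \<longleftrightarrow> (x < k \<and> k \<le> y \<and> bit (y - k) x) \<or> (x = k + 2^k - 1 \<and> k \<le> y)"
definition GE :: "nat \<Rightarrow> nat \<Rightarrow> nat \<Rightarrow> bool" where
  "GE k x y \<longleftrightarrow> x \<in> GV k \<and> y \<in> GV k \<and> x \<noteq> y \<and> (GP k x y \<or> GP k y x)"

lemma G_simple: "simple_graph (GV k) (GE k)"
  unfolding simple_graph_def GE_def by (auto simp: GV_def)

lemma bits_differ: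
  fixes n m :: nat
  assumes "n < 2^k" "m < 2^k" "n \<noteq> m"
  shows "\<exists>i<k. bit n i \<noteq> bit m i"
proof -
  have "take_bit k n = n" "take_bit k m = m" using assms by (simp_all add: take_bit_nat_eq_self_iff)
  moreover obtain i where "bit n i \<noteq> bit m i" using assms(3) bit_eq_iff by blast
  ultimately show ?thesis by (metis bit_take_bit_iff)
qed

lemma G_adj_A:
  assumes "k \<le> x" "x \<in> GV k" "i < k"
  shows "GE k x i \<longleftrightarrow> bit (x - k) i"
  using assms by (auto simp: GE_def GP_def GV_def)

lemma G_resolving: "adj_resolving (GV k) (GE k) {..<k}"
  unfolding adj_resolving_def
proof (intro conjI ballI impI)
  show "{..<k} \<subseteq> GV k" by (auto simp: GV_def)
next
  fix x y assume x: "x \<in> GV k" and y: "y \<in> GV k" and ne: "x \<noteq> y"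
  note g = G_simple[of k]
  show "\<exists>z\<in>{..<k}. dist1 (GV k) (GE k) x z \<noteq> dist1 (GV k) (GE k) y z"
  proof (cases "x < k")
    case True
    then show ?thesis using dist1_self[OF x] dist1_nz[OF ne[symmetric]] by (metis lessThan_iff)
  next
    case xk: False
    show ?thesis
    proof (cases "y < k")
      case True
      then show ?thesis using dist1_self[OF y] dist1_nz[OF ne] by (metis lessThan_iff)
    next
      case yk: False
      have "x - k < 2^k" "y - k < 2^k" "x - k \<noteq> y - k" using x y xk yk ne by (auto simp: GV_def)
      from bits_differ[OF this] obtain i where i: "i < k" "bit (x - k) i \<noteq> bit (y - k) i" by blast
      have "GE k x i \<noteq> GE k y i" using G_adj_A[of k x i] G_adj_A[of k y i] i x y xk yk by auto
      then have "dist1 (GV k) (GE k) x i \<noteq> dist1 (GV k) (GE k) y i"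
        using dist1_one[OF g] by metis
      then show ?thesis using i by blast
    qed
  qed
qed

lemma G_adim: "adim (GV k) (GE k) = k"
  unfolding adim_def
proof (rule Min_eqI)
  show "finite {card A |A. adj_resolving (GV k) (GE k) A}"
    by (rule fin_cards) (simp add: GV_def)
  show "k \<in> {card A |A. adj_resolving (GV k) (GE k) A}"
    using G_resolving[of k] by force
  fix y assume "y \<in> {card A |A. adj_resolving (GV k) (GE k) A}"
  then obtain R where R: "adj_resolving (GV k) (GE k) R" "y = card R" by auto
  have "card (GV k) \<le> y + 2 ^ y" using card_bound[OF G_simple R(1)] R(2) by simp
  then have le: "k + 2^k \<le> y + 2^y" by (simp add: GV_def)
  show "k \<le> y"
  proof (rule ccontr)
    assume "\<not> k \<le> y"
    then have "y < k" by simp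
    then have "(2::nat)^y < 2^k" by (simp add: power_strict_increasing)
    with \<open>y < k\<close> le show False by simp
  qed
qed

lemma G_degree: "degree (GV k) (GE k) (k + 2^k - 1) = k + 2^k - 1"
proof -
  have "{u \<in> GV k. GE k (k + 2^k - 1) u} = GV k - {k + 2^k - 1}"
  proof (intro set_eqI iffI)
    fix u assume "u \<in> {u \<in> GV k. GE k (k + 2^k - 1) u}"
    then show "u \<in> GV k - {k + 2^k - 1}" by (auto simp: GE_def)
  next
    fix u assume u: "u \<in> GV k - {k + 2^k - 1}"
    have c: "k + 2^k - 1 \<in> GV k" by (simp add: GV_def)
    show "u \<in> {u \<in> GV k. GE k (k + 2^k - 1) u}"
    proof (cases "u < k")
      case True
      have "bit (mask k :: nat) u" using True by (simp add: bit_mask_iff)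
      then have "bit ((2::nat)^k - 1) u" by (simp add: mask_eq_exp_minus_1)
      moreover have "(0::nat) < 2^k" by simp
      ultimately have "GP k u (k + 2^k - 1)" using True unfolding GP_def
        by (metis add_diff_cancel_left' Nat.add_diff_assoc le_add1 Suc_leI One_nat_def)
      then show ?thesis using u c by (auto simp: GE_def)
    next
      case False
      then have "GP k (k + 2^k - 1) u" by (simp add: GP_def)
      then show ?thesis using u c by (auto simp: GE_def)
    qed
  qed
  then show ?thesis unfolding degree_def by (simp add: GV_def)
qed

theorem corollary3p6:
  fixes k :: nat
  assumes "k \<ge> 1"
  shows "(\<forall>(V :: 'a set) E. simple_graph V E \<and> adim V E = k \<longrightarrow>
            (\<forall>v\<in>V. degree V E v \<le> k + 2 ^ k - 1))
       \<and> (\<exists>(V :: nat set) E v. simple_graph V E \<and> adim V E = k \<and> v \<in> V \<and>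
            degree V E v = k + 2 ^ k - 1)"
proof
  show "\<forall>(V :: 'a set) E. simple_graph V E \<and> adim V E = k \<longrightarrow>
            (\<forall>v\<in>V. degree V E v \<le> k + 2 ^ k - 1)"
    by (intro allI impI ballI, elim conjE, rule part1) auto
  have c: "k + 2^k - 1 \<in> GV k" by (simp add: GV_def)
  show "\<exists>(V :: nat set) E v. simple_graph V E \<and> adim V E = k \<and> v \<in> V \<and>
            degree V E v = k + 2 ^ k - 1"
    by (intro exI[of _ "GV k"] exI[of _ "GE k"] exI[of _ "k + 2^k - 1"])
       (intro conjI G_simple G_adim G_degree c)
qed

end
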